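(* Let $k\ge1$, let $(\mathcal X,\mathcal I)$ be a set system with $n$ items and $m$ sets, let $\hat{\mathcal I}=\{\hat S\}_{S\in\mathcal I}$ be produced by the greedy partition procedure described in the context, and let $Q\subseteq\mathcal X$. Let $S_1,\dots,S_k\in\mathcal I$ be sets such that $\hat S_1,\dots,\hat S_k$ maximize $|(\bigcup_{i=1}^k\hat S_i)\cap Q|$ over all choices of $k$ members of $\hat{\mathcal I}$. Then for every $S_1^*,\dots,S_k^*\in\mathcal I$, $$\Big|\Big(\bigcup_{i=1}^k S_i\Big)\cap Q\Big|\ \ge\ \frac{|(\bigcup_{i=1}^k S_i^* )\cap Q|}{O(\sqrt{n/k})}.$$
   Context: A set system with $n$ items and $m$ sets is a pair $(\mathcal X,\mathcal I)$ with $\mathcal X=\{1,\dots,n\}$ and $\mathcal I$ an indexed family of $m$ subsets of $\mathcal X$. Greedy partition procedure: initially all items are "uncovered" and all sets "unchosen"; while there are unchosen sets, pick the unchosen $S\in\mathcal I$ containing the most uncovered items, let $\hat S$ be the set of uncovered items of $S$, mark them "covered", and mark $S$ "chosen". Thus $\{\hat S\}$ partitions $\bigcup_{S\in\mathcal I}S$. *)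

theory Defs
  imports Complex_Main
begin

text \<open>A set system with items {1..n} and m sets is given by an indexed family
  S :: nat \<Rightarrow> nat set, the sets being S 0, ..., S (m-1), each a subset of {1..n}.\<close>

definition set_system :: "nat \<Rightarrow> nat \<Rightarrow> (nat \<Rightarrow> nat set) \<Rightarrow> bool" where
  "set_system n m S \<longleftrightarrow> (\<forall>j<m. S j \<subseteq> {1..n})"

definition covered :: "(nat \<Rightarrow> nat set) \<Rightarrow> nat list \<Rightarrow> nat set" where
  "covered S ys = (\<Union>i\<in>set ys. S i)"

text \<open>A run of the greedy partition procedure: the order in which the sets are chosen.
  At step t, the chosen set contains the most uncovered items among the unchosen sets
  (ties broken arbitrarily).\<close>
definition greedy_order :: "nat \<Rightarrow> (nat \<Rightarrow> nat set) \<Rightarrow> nat list \<Rightarrow> bool" where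
  "greedy_order m S ord \<longleftrightarrow> distinct ord \<and> set ord = {..<m} \<and>
     (\<forall>t<m. \<forall>j\<in>{..<m} - set (take t ord).
        card (S j - covered S (take t ord)) \<le> card (S (ord ! t) - covered S (take t ord)))"

text \<open>The part \<open>\<hat>S\<close> of set j: its items that were uncovered when j was chosen.\<close>
definition hat :: "(nat \<Rightarrow> nat set) \<Rightarrow> nat list \<Rightarrow> nat \<Rightarrow> nat set" where
  "hat S ord j = S j - covered S (takeWhile (\<lambda>i. i \<noteq> j) ord)"

end

theory Submission
  imports Defs "HOL-Analysis.Analysis"
begin

lemma takeWhile_nth_distinct:
  "distinct xs \<Longrightarrow> t < length xs \<Longrightarrow> takeWhile (\<lambda>i. i \<noteq> xs!t) xs = take t xs"
proof (induction xs arbitrary: t)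
  case Nil then show ?case by simp
next
  case (Cons a xs)
  show ?case
  proof (cases t)
    case 0 then show ?thesis by simp
  next
    case (Suc t')
    then have "xs ! t' \<noteq> a" using Cons.prems by (metis distinct.simps(2) length_Cons not_less_eq nth_mem)
    then show ?thesis using Cons Suc by simp
  qed
qed

lemma rank_sum:
  fixes f :: "'a \<Rightarrow> nat"
  assumes "finite A"
  shows "card A * (card A + 1) \<le> 2 * (\<Sum>e\<in>A. card {e'\<in>A. f e \<le> f e'})"
  using assms
proof (induction "card A" arbitrary: A)
  case 0 then show ?case by simp
next
  case (Suc c)
  then have "A \<noteq> {}" by auto
  have "Min (f ` A) \<in> f ` A" using Suc.prems \<open>A \<noteq> {}\<close> by simp
  then obtain e0 where e00: "e0 \<in> A" "f e0 = Min (f ` A)" by auto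
  have e0: "e0 \<in> A" "\<forall>e\<in>A. f e0 \<le> f e" using e00 Suc.prems by auto
  define B where "B = A - {e0}"
  have fB: "finite B" "card B = c" using Suc B_def e0 by auto
  have IH: "card B * (card B + 1) \<le> 2 * (\<Sum>e\<in>B. card {e'\<in>B. f e \<le> f e'})"
    using Suc.hyps(1)[of B] fB by simp
  have A: "A = insert e0 B" "e0 \<notin> B" using B_def e0 by auto
  have s1: "(\<Sum>e\<in>A. card {e'\<in>A. f e \<le> f e'}) = card {e'\<in>A. f e0 \<le> f e'} + (\<Sum>e\<in>B. card {e'\<in>A. f e \<le> f e'})"
    using A fB by simp
  have s2: "{e'\<in>A. f e0 \<le> f e'} = A" using e0 by auto
  have s3: "(\<Sum>e\<in>B. card {e'\<in>B. f e \<le> f e'}) \<le> (\<Sum>e\<in>B. card {e'\<in>A. f e \<le> f e'})"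
    by (intro sum_mono card_mono) (use Suc.prems A in auto)
  have "(\<Sum>e\<in>B. card {e'\<in>B. f e \<le> f e'}) + card A \<le> (\<Sum>e\<in>A. card {e'\<in>A. f e \<le> f e'})"
    using s1 s2 s3 by simp
  moreover have "card A = Suc c" using Suc.hyps(2) by simp
  ultimately show ?case using IH fB by (simp add: algebra_simps)
qed


locale gp =
  fixes n m k :: nat and S :: "nat \<Rightarrow> nat set" and ord :: "nat list" and Q :: "nat set"
    and idx star :: "nat \<Rightarrow> nat"
  assumes k1: "k \<ge> 1" and ss: "set_system n m S" and go: "greedy_order m S ord"
    and Qs: "Q \<subseteq> {1..n}" and idx: "\<forall>i<k. idx i < m"
    and opt: "\<forall>idx'. (\<forall>i<k. idx' i < m) \<longrightarrow>
        card ((\<Union>i<k. hat S ord (idx' i)) \<inter> Q) \<le> card ((\<Union>i<k. hat S ord (idx i)) \<inter> Q)"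
    and star: "\<forall>i<k. star i < m"
begin

definition h where "h t = S (ord ! t) - covered S (take t ord)"
definition H where "H = card ((\<Union>i<k. hat S ord (idx i)) \<inter> Q)"

lemma dist: "distinct ord" and setord: "set ord = {..<m}"
  using go by (auto simp: greedy_order_def)

lemma len: "length ord = m"
  using distinct_card[OF dist] setord by simp

lemma ord_lt: "t < m \<Longrightarrow> ord ! t < m"
  using setord len nth_mem by fastforce

lemma ex_pos: "j < m \<Longrightarrow> \<exists>t<m. ord ! t = j"
proof -
  assume "j < m"
  then have "j \<in> set ord" using setord by simp
  then obtain t where "t < length ord" "ord ! t = j" by (auto simp: in_set_conv_nth)
  then show ?thesis using len by auto
qed

lemma Ssub: "j < m \<Longrightarrow> S j \<subseteq> {1..n}"
  using ss by (auto simp: set_system_def)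

lemma Sfin: "j < m \<Longrightarrow> finite (S j)"
  using Ssub finite_subset by blast

lemma cov: "t \<le> m \<Longrightarrow> covered S (take t ord) = (\<Union>t'<t. S (ord ! t'))"
proof -
  assume "t \<le> m"
  then have "take t ord = map (\<lambda>i. ord ! i) [0..<t]"
    using len by (intro nth_equalityI) auto
  then have "set (take t ord) = (\<lambda>i. ord ! i) ` {..<t}"
    by (simp add: atLeast0LessThan)
  then show ?thesis by (simp add: covered_def)
qed

lemma hat_eq: "t < m \<Longrightarrow> hat S ord (ord ! t) = h t"
  using takeWhile_nth_distinct[OF dist, of t] len by (simp add: hat_def h_def)

lemma h_disj: "t1 < m \<Longrightarrow> t2 < m \<Longrightarrow> t1 \<noteq> t2 \<Longrightarrow> h t1 \<inter> h t2 = {}"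
proof -
  have *: "h a \<inter> h b = {}" if "a < b" "b < m" for a b
    using that cov[of b] by (auto simp: h_def)
  assume "t1 < m" "t2 < m" "t1 \<noteq> t2"
  then show ?thesis using *[of t1 t2] *[of t2 t1] by (cases "t1 < t2") auto
qed

lemma h_sub: "t < m \<Longrightarrow> h t \<subseteq> {1..n}"
  using Ssub[OF ord_lt] by (auto simp: h_def)

lemma h_fin: "t < m \<Longrightarrow> finite (h t)"
  using h_sub finite_subset by blast

lemma sum_h: "(\<Sum>t<m. card (h t)) \<le> n"
proof -
  have "(\<Sum>t<m. card (h t)) = card (\<Union>t<m. h t)"
    by (rule card_UN_disjoint[symmetric]) (auto intro: h_fin dest: h_disj)
  also have "\<dots> \<le> card {1..n}" by (rule card_mono) (simp, rule UN_least, use h_sub in simp)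
  finally show ?thesis by simp
qed

lemma greedy: "t < m \<Longrightarrow> j < m \<Longrightarrow> j \<notin> set (take t ord) \<Longrightarrow>
   card (S j - covered S (take t ord)) \<le> card (h t)"
proof -
  assume a: "t < m" "j < m" "j \<notin> set (take t ord)"
  have "\<forall>t<m. \<forall>j\<in>{..<m} - set (take t ord).
        card (S j - covered S (take t ord)) \<le> card (S (ord ! t) - covered S (take t ord))"
    using go unfolding greedy_order_def by blast
  then have "card (S j - covered S (take t ord)) \<le> card (S (ord ! t) - covered S (take t ord))"
    using a by blast
  then show ?thesis by (simp add: h_def)
qed


lemma cardQ_disj: "finite J \<Longrightarrow> J \<subseteq> {..<m} \<Longrightarrow>
    card ((\<Union>t\<in>J. h t) \<inter> Q) = (\<Sum>t\<in>J. card (h t \<inter> Q))"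
proof -
  assume J: "finite J" "J \<subseteq> {..<m}"
  have "(\<Union>t\<in>J. h t) \<inter> Q = (\<Union>t\<in>J. h t \<inter> Q)" by blast
  moreover have "card (\<Union>t\<in>J. h t \<inter> Q) = (\<Sum>t\<in>J. card (h t \<inter> Q))"
  proof (rule card_UN_disjoint[OF J(1)])
    show "\<forall>i\<in>J. finite (h i \<inter> Q)" using J h_fin by blast
    show "\<forall>i\<in>J. \<forall>j\<in>J. i \<noteq> j \<longrightarrow> h i \<inter> Q \<inter> (h j \<inter> Q) = {}"
      using J h_disj by blast
  qed
  ultimately show ?thesis by simp
qed

lemma L: "J \<subseteq> {..<m} \<Longrightarrow> J \<noteq> {} \<Longrightarrow> card J \<le> k \<Longrightarrow> (\<Sum>t\<in>J. card (h t \<inter> Q)) \<le> H"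
proof -
  assume J: "J \<subseteq> {..<m}" "J \<noteq> {}" "card J \<le> k"
  have fJ: "finite J" using J(1) finite_subset[OF _ finite_lessThan] by blast
  obtain xs where xs: "set xs = J" "distinct xs" using finite_distinct_list[OF fJ] by blast
  have lx: "length xs = card J" using xs distinct_card by fastforce
  have ne: "xs \<noteq> []" using xs J by auto
  define f where "f i = (if i < length xs then xs ! i else xs ! 0)" for i
  have fim: "f ` {..<k} = J"
  proof
    show "f ` {..<k} \<subseteq> J" using ne xs by (auto simp: f_def)
    show "J \<subseteq> f ` {..<k}"
    proof
      fix x assume "x \<in> J"
      then obtain i where "i < length xs" "xs ! i = x" using xs by (auto simp: in_set_conv_nth)
      then show "x \<in> f ` {..<k}" using lx J(3) by (auto simp: f_def image_iff intro!: bexI[of _ i])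
    qed
  qed
  define idx' where "idx' i = ord ! (f i)" for i
  have fl: "i < k \<Longrightarrow> f i < m" for i using fim J(1) by blast
  have "\<forall>i<k. idx' i < m" using fl ord_lt by (simp add: idx'_def)
  then have "card ((\<Union>i<k. hat S ord (idx' i)) \<inter> Q) \<le> H" using opt by (simp add: H_def)
  moreover have "(\<Union>i<k. hat S ord (idx' i)) = (\<Union>t\<in>J. h t)"
  proof -
    have "(\<Union>i<k. hat S ord (idx' i)) = (\<Union>i<k. h (f i))"
      using fl hat_eq by (simp add: idx'_def)
    also have "\<dots> = (\<Union>t\<in>f ` {..<k}. h t)" by simp
    finally show ?thesis using fim by simp
  qed
  ultimately show ?thesis using cardQ_disj[OF fJ J(1)] by simp
qed

definition TB where "TB = {t. t < m \<and> H < k * card (h t \<inter> Q)}"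

lemma TB_card: "card TB \<le> k"
proof (rule ccontr)
  assume "\<not> card TB \<le> k"
  then have "k \<le> card TB" by simp
  then obtain J where J: "J \<subseteq> TB" "card J = k" by (rule obtain_subset_with_card_n)
  have TBm: "TB \<subseteq> {..<m}" by (auto simp: TB_def)
  have fJ: "finite J" using J TBm finite_subset[OF _ finite_lessThan] by blast
  have Jne: "J \<noteq> {}" using J k1 by auto
  have "(\<Sum>t\<in>J. card (h t \<inter> Q)) \<le> H" using L[of J] J TBm Jne by auto
  then have "k * (\<Sum>t\<in>J. card (h t \<inter> Q)) \<le> k * H" by simp
  moreover have "(\<Sum>t\<in>J. H) < (\<Sum>t\<in>J. k * card (h t \<inter> Q))"
  proof (rule sum_strict_mono[OF fJ Jne])
    fix t assume "t \<in> J"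
    then have "t \<in> TB" using J by blast
    then show "H < k * card (h t \<inter> Q)" by (simp add: TB_def)
  qed
  moreover have "(\<Sum>t\<in>J. H) = k * H" using J by simp
  moreover have "(\<Sum>t\<in>J. k * card (h t \<inter> Q)) = k * (\<Sum>t\<in>J. card (h t \<inter> Q))"
    by (rule sum_distrib_left[symmetric])
  ultimately show False by linarith
qed

lemma sum_TB: "(\<Sum>t\<in>TB. card (h t \<inter> Q)) \<le> H"
proof (cases "TB = {}")
  case True then show ?thesis by simp
next
  case False then show ?thesis using L[of TB] TB_card by (auto simp: TB_def)
qed


definition tm where "tm e = (LEAST t. e \<in> S (ord ! t))"

lemma tm_props:
  assumes "e \<in> S j" "j < m"
  shows "tm e < m" "e \<in> h (tm e)" "\<And>t. t \<le> tm e \<Longrightarrow> e \<notin> covered S (take t ord)"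
proof -
  obtain t0 where t0: "t0 < m" "ord ! t0 = j" using ex_pos[OF assms(2)] by blast
  have e0: "e \<in> S (ord ! t0)" using t0 assms by simp
  have le: "tm e \<le> t0" unfolding tm_def using e0 by (rule Least_le)
  then show tml: "tm e < m" using t0 by linarith
  have inS: "e \<in> S (ord ! tm e)" unfolding tm_def using e0 by (rule LeastI)
  have notS: "e \<notin> S (ord ! t')" if "t' < tm e" for t'
    using not_less_Least[of t' "\<lambda>t. e \<in> S (ord ! t)"] that unfolding tm_def by blast
  show nc: "e \<notin> covered S (take t ord)" if "t \<le> tm e" for t
  proof -
    have "t \<le> m" using that tml by linarith
    then show ?thesis using cov[of t] notS that by auto
  qed
  show "e \<in> h (tm e)" using inS nc[of "tm e"] by (simp add: h_def)
qed

lemma main: "real (card ((\<Union>i<k. S (star i)) \<inter> Q)) \<le> 3 * max 1 (sqrt (real n / real k)) * real H"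
proof -
  define U where "U = (\<Union>i<k. S (star i)) \<inter> Q"
  define UB where "UB = {e\<in>U. tm e \<in> TB}"
  define UNB where "UNB = {e\<in>U. tm e \<notin> TB}"
  define M where "M = max 1 (sqrt (real n / real k))"
  have M1: "M \<ge> 1" by (simp add: M_def)
  have Uin: "\<exists>i<k. e \<in> S (star i)" "e \<in> Q" if "e \<in> U" for e using that by (auto simp: U_def)
  have Utm: "tm e < m" "e \<in> h (tm e)" if "e \<in> U" for e
    using Uin[OF that] tm_props star by blast+
  have fQ: "finite Q" using Qs finite_subset[OF _ finite_atLeastAtMost] by blast
  have fU: "finite U" unfolding U_def using fQ by simp
  have fUB: "finite UB" "finite UNB" using fU by (auto simp: UB_def UNB_def)
  have "U = UB \<union> UNB" by (auto simp: UB_def UNB_def)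
  then have c1: "card U \<le> card UB + card UNB" using card_Un_le by metis
  have fTB: "finite TB" by (rule finite_subset[OF _ finite_lessThan[of m]]) (auto simp: TB_def)
  have "UB \<subseteq> (\<Union>t\<in>TB. h t \<inter> Q)"
  proof
    fix e assume "e \<in> UB"
    then have "e \<in> U" "tm e \<in> TB" by (auto simp: UB_def)
    then show "e \<in> (\<Union>t\<in>TB. h t \<inter> Q)" using Utm Uin by blast
  qed
  then have "card UB \<le> card (\<Union>t\<in>TB. h t \<inter> Q)"
    by (rule card_mono[rotated]) (use fTB h_fin in \<open>auto simp: TB_def\<close>)
  also have "\<dots> \<le> (\<Sum>t\<in>TB. card (h t \<inter> Q))" by (rule card_UN_le[OF fTB])
  also have "\<dots> \<le> H" by (rule sum_TB)
  finally have cUB: "card UB \<le> H" .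
  have nb: "k * card (h (tm e) \<inter> Q) \<le> H" if "e \<in> UNB" for e
  proof -
    have "e \<in> U" "tm e \<notin> TB" using that by (auto simp: UNB_def)
    then show ?thesis using Utm(1)[of e] by (auto simp: TB_def not_less)
  qed
  show ?thesis
  proof (cases "H < k")
    case True
    have "UNB = {}"
    proof (rule ccontr)
      assume "UNB \<noteq> {}"
      then obtain e where e: "e \<in> UNB" by blast
      then have "e \<in> U" by (simp add: UNB_def)
      then have "e \<in> h (tm e) \<inter> Q" using Utm Uin by blast
      moreover have "finite (h (tm e) \<inter> Q)" using h_fin Utm \<open>e \<in> U\<close> by blast
      ultimately have "card (h (tm e) \<inter> Q) \<ge> 1"
        by (metis One_nat_def Suc_leI card_gt_0_iff empty_iff)
      then have "k * card (h (tm e) \<inter> Q) \<ge> k" by simp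
      then show False using nb[OF e] True by linarith
    qed
    then have "card U \<le> H" using c1 cUB by simp
    then have "real (card U) \<le> 1 * real H" by simp
    also have "\<dots> \<le> 3 * M * real H" using M1 by (intro mult_right_mono) auto
    finally show ?thesis by (simp add: U_def M_def)
  next
    case False
    then have Hk: "k \<le> H" by simp
    define A where "A i = {e\<in>UNB. e \<in> S (star i) \<and> (\<forall>i'<i. e \<notin> S (star i'))}" for i
    define q where "q i = card (A i)" for i
    define W where "W = (\<Sum>e\<in>UNB. card (h (tm e)))"
    have AU: "A i \<subseteq> UNB" for i by (auto simp: A_def)
    have fA: "finite (A i)" for i using AU fUB finite_subset by blast
    have key1: "q i * (q i + 1) \<le> 2 * (\<Sum>e\<in>A i. card (h (tm e)))" if i: "i < k" for i
    proof -
      have "q i * (q i + 1) \<le> 2 * (\<Sum>e\<in>A i. card {e'\<in>A i. tm e \<le> tm e'})"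
        unfolding q_def by (rule rank_sum[OF fA])
      also have "(\<Sum>e\<in>A i. card {e'\<in>A i. tm e \<le> tm e'}) \<le> (\<Sum>e\<in>A i. card (h (tm e)))"
      proof (rule sum_mono)
        fix e assume e: "e \<in> A i"
        have si: "star i < m" using star i by blast
        have eS: "e \<in> S (star i)" using e by (simp add: A_def)
        have tme: "tm e < m" using tm_props(1)[OF eS si] .
        have nce: "e \<notin> covered S (take (tm e) ord)" using tm_props(3)[OF eS si] by blast
        have "{e'\<in>A i. tm e \<le> tm e'} \<subseteq> S (star i) - covered S (take (tm e) ord)"
        proof
          fix e' assume "e' \<in> {e'\<in>A i. tm e \<le> tm e'}"
          then have "e' \<in> S (star i)" "tm e \<le> tm e'" by (auto simp: A_def)
          then show "e' \<in> S (star i) - covered S (take (tm e) ord)"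
            using tm_props(3)[OF _ si] by blast
        qed
        then have "card {e'\<in>A i. tm e \<le> tm e'} \<le> card (S (star i) - covered S (take (tm e) ord))"
          by (rule card_mono[rotated]) (use Sfin[OF si] in blast)
        also have "\<dots> \<le> card (h (tm e))"
        proof (rule greedy[OF tme si])
          show "star i \<notin> set (take (tm e) ord)" using nce eS by (auto simp: covered_def)
        qed
        finally show "card {e'\<in>A i. tm e \<le> tm e'} \<le> card (h (tm e))" .
      qed
      finally show ?thesis by simp
    qed
    have disjA: "A i \<inter> A j = {}" if "i \<noteq> j" for i j
    proof (cases "i < j")
      case True then show ?thesis by (auto simp: A_def)
    next
      case False then have "j < i" using that by simp
      then show ?thesis by (auto simp: A_def)
    qed
    have key2: "(\<Sum>i<k. \<Sum>e\<in>A i. card (h (tm e))) \<le> W"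
    proof -
      have "(\<Sum>i<k. \<Sum>e\<in>A i. card (h (tm e))) = (\<Sum>e\<in>(\<Union>i<k. A i). card (h (tm e)))"
        by (rule sum.UNION_disjoint[symmetric]) (use fA disjA in auto)
      also have "\<dots> \<le> W" unfolding W_def
        by (rule sum_mono2[OF fUB(2)]) (use AU in auto)
      finally show ?thesis .
    qed
    have key3: "k * W \<le> n * H"
    proof -
      have tmU: "tm ` UNB \<subseteq> {..<m}" using Utm by (auto simp: UNB_def)
      have "W = (\<Sum>t<m. \<Sum>e\<in>{e\<in>UNB. tm e = t}. card (h (tm e)))"
        unfolding W_def by (rule sum.group[symmetric, OF fUB(2) finite_lessThan tmU])
      also have "\<dots> = (\<Sum>t<m. card (h t) * card {e\<in>UNB. tm e = t})"
      proof (rule sum.cong[OF refl])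
        fix t
        have "(\<Sum>e\<in>{e\<in>UNB. tm e = t}. card (h (tm e))) = (\<Sum>e\<in>{e\<in>UNB. tm e = t}. card (h t))"
          by (rule sum.cong) auto
        then show "(\<Sum>e\<in>{e\<in>UNB. tm e = t}. card (h (tm e))) = card (h t) * card {e\<in>UNB. tm e = t}"
          by simp
      qed
      finally have W: "k * W = (\<Sum>t<m. card (h t) * (k * card {e\<in>UNB. tm e = t}))"
        by (simp add: sum_distrib_left algebra_simps)
      have bnd: "k * card {e\<in>UNB. tm e = t} \<le> H" if t: "t < m" for t
      proof (cases "{e\<in>UNB. tm e = t} = {}")
        case True then show ?thesis by (metis card.empty mult_0_right zero_le)
      next
        case False
        then obtain e where e: "e \<in> UNB" "tm e = t" by blast
        have "{e\<in>UNB. tm e = t} \<subseteq> h t \<inter> Q" using Utm Uin by (auto simp: UNB_def)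
        then have "card {e\<in>UNB. tm e = t} \<le> card (h t \<inter> Q)"
          by (rule card_mono[rotated]) (use h_fin[OF t] in blast)
        then have "k * card {e\<in>UNB. tm e = t} \<le> k * card (h t \<inter> Q)" by simp
        also have "\<dots> \<le> H" using nb[OF e(1)] e(2) by simp
        finally show ?thesis .
      qed
      have "k * W \<le> (\<Sum>t<m. card (h t) * H)"
        unfolding W by (rule sum_mono) (use bnd in \<open>simp add: mult_le_mono2\<close>)
      also have "\<dots> = (\<Sum>t<m. card (h t)) * H" by (simp add: sum_distrib_right)
      also have "\<dots> \<le> n * H" using sum_h by simp
      finally show ?thesis .
    qed
    have key4: "card UNB \<le> (\<Sum>i<k. q i)"
    proof -
      have "UNB \<subseteq> (\<Union>i<k. A i)"
      proof
        fix e assume e: "e \<in> UNB"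
        then have "e \<in> U" by (simp add: UNB_def)
        then obtain i0 where i0: "i0 < k" "e \<in> S (star i0)" using Uin by blast
        define i where "i = (LEAST i. e \<in> S (star i))"
        have "e \<in> S (star i)" unfolding i_def using i0(2) by (rule LeastI)
        moreover have "i \<le> i0" unfolding i_def using i0(2) by (rule Least_le)
        moreover have "\<forall>i'<i. e \<notin> S (star i')" unfolding i_def using not_less_Least by blast
        ultimately show "e \<in> (\<Union>i<k. A i)" using e i0 by (auto simp: A_def intro!: bexI[of _ i])
      qed
      then have "card UNB \<le> card (\<Union>i<k. A i)"
        by (rule card_mono[rotated]) (use fA in simp)
      also have "\<dots> \<le> (\<Sum>i<k. q i)" unfolding q_def by (rule card_UN_le) simp
      finally show ?thesis .
    qed
    have sq: "k * (\<Sum>i<k. q i ^ 2) \<le> 2 * n * H"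
    proof -
      have "(\<Sum>i<k. q i ^ 2) \<le> (\<Sum>i<k. q i * (q i + 1))"
        by (rule sum_mono) (simp add: power2_eq_square)
      also have "\<dots> \<le> (\<Sum>i<k. 2 * (\<Sum>e\<in>A i. card (h (tm e))))"
        by (rule sum_mono) (rule key1, simp)
      also have "\<dots> \<le> 2 * W" using key2 by (simp add: sum_distrib_left[symmetric])
      finally have "k * (\<Sum>i<k. q i ^ 2) \<le> k * (2 * W)" by simp
      also have "\<dots> \<le> 2 * n * H" using key3 by simp
      finally show ?thesis .
    qed
    define s where "s = (\<Sum>i<k. q i)"
    have "(real s)^2 \<le> (\<Sum>i<k. (real (q i))^2) * real k"
      using sum_squared_le_sum_of_squares[of "\<lambda>i. real (q i)" "{..<k}"] by (simp add: s_def)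
    also have "\<dots> = real (k * (\<Sum>i<k. q i ^ 2))" by simp
    also have "\<dots> \<le> real (2 * n * H)" using sq by linarith
    finally have s2: "(real s)^2 \<le> 2 * real n * real H" by simp
    have kpos: "real k > 0" using k1 by simp
    have "2 * real n * real H \<le> (sqrt (2 * real n / real k) * real H)^2"
    proof -
      have "(sqrt (2 * real n / real k) * real H)^2 = 2 * real n / real k * real H * real H"
      proof -
        have "(sqrt (2 * real n / real k))^2 = 2 * real n / real k" by simp
        then show ?thesis by (simp only: power_mult_distrib) (simp add: power2_eq_square)
      qed
      moreover have "2 * real n * real H * real k \<le> 2 * real n * real H * real H"
        using Hk by (intro mult_left_mono) auto
      ultimately show ?thesis using kpos by (simp add: field_simps power2_eq_square)
    qed
    with s2 have "(real s)^2 \<le> (sqrt (2 * real n / real k) * real H)^2" by linarith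
    then have sb: "real s \<le> sqrt (2 * real n / real k) * real H"
      by (rule power2_le_imp_le) simp
    have "sqrt (2 * real n / real k) = sqrt 2 * sqrt (real n / real k)"
      by (simp add: real_sqrt_mult[symmetric])
    also have "\<dots> \<le> 2 * M"
    proof -
      have "sqrt 2 \<le> sqrt 4" by (rule real_sqrt_le_mono) simp
      then have "sqrt 2 \<le> 2" by (simp add: real_sqrt_four)
      moreover have "sqrt (real n / real k) \<le> M" by (simp add: M_def)
      ultimately show ?thesis by (intro mult_mono) auto
    qed
    finally have "real s \<le> 2 * M * real H" using sb
      by (meson mult_right_mono of_nat_0_le_iff order_trans)
    have "real (card U) \<le> real H + real s" using c1 cUB key4 s_def by linarith
    also have "\<dots> \<le> real H + 2 * M * real H" using \<open>real s \<le> 2 * M * real H\<close> by simp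
    also have "\<dots> \<le> 3 * M * real H"
    proof -
      have "1 * real H \<le> M * real H" using M1 by (intro mult_right_mono) auto
      then show ?thesis by (simp add: algebra_simps)
    qed
    finally show ?thesis by (simp add: U_def M_def)
  qed
qed

end

theorem mainTheorem5:
  "\<exists>C>0. \<forall>n m k (S :: nat \<Rightarrow> nat set) ord (Q :: nat set) (idx :: nat \<Rightarrow> nat).
     k \<ge> 1 \<longrightarrow> set_system n m S \<longrightarrow> greedy_order m S ord \<longrightarrow> Q \<subseteq> {1..n} \<longrightarrow>
     (\<forall>i<k. idx i < m) \<longrightarrow>
     (\<forall>idx'. (\<forall>i<k. idx' i < m) \<longrightarrow>
        card ((\<Union>i<k. hat S ord (idx' i)) \<inter> Q) \<le> card ((\<Union>i<k. hat S ord (idx i)) \<inter> Q)) \<longrightarrow>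
     (\<forall>star. (\<forall>i<k. star i < m) \<longrightarrow>
        real (card ((\<Union>i<k. S (star i)) \<inter> Q))
          \<le> C * max 1 (sqrt (real n / real k)) * real (card ((\<Union>i<k. S (idx i)) \<inter> Q)))"
proof (intro exI[of _ 3] conjI allI impI)
  fix n m k :: nat and S :: "nat \<Rightarrow> nat set" and ord :: "nat list" and Q :: "nat set" and idx star :: "nat \<Rightarrow> nat"
  assume "k \<ge> 1" "set_system n m S" "greedy_order m S ord" "Q \<subseteq> {1..n}" "\<forall>i<k. idx i < m"
    "\<forall>idx'. (\<forall>i<k. idx' i < m) \<longrightarrow>
        card ((\<Union>i<k. hat S ord (idx' i)) \<inter> Q) \<le> card ((\<Union>i<k. hat S ord (idx i)) \<inter> Q)"
    "\<forall>i<k. star i < m"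
  then interpret g: gp n m k S ord Q idx star by unfold_locales
  have "real (card ((\<Union>i<k. S (star i)) \<inter> Q)) \<le> 3 * max 1 (sqrt (real n / real k)) * real g.H"
    by (rule g.main)
  also have "g.H \<le> card ((\<Union>i<k. S (idx i)) \<inter> Q)"
    unfolding g.H_def
  proof (rule card_mono)
    show "finite ((\<Union>i<k. S (idx i)) \<inter> Q)"
      using \<open>Q \<subseteq> {1..n}\<close> finite_subset[OF _ finite_atLeastAtMost] by blast
    show "(\<Union>i<k. hat S ord (idx i)) \<inter> Q \<subseteq> (\<Union>i<k. S (idx i)) \<inter> Q"
      by (auto simp: hat_def)
  qed
  then have "3 * max 1 (sqrt (real n / real k)) * real g.H \<le> 3 * max 1 (sqrt (real n / real k)) * real (card ((\<Union>i<k. S (idx i)) \<inter> Q))"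
    by (intro mult_left_mono) auto
  finally show "real (card ((\<Union>i<k. S (star i)) \<inter> Q)) \<le> 3 * max 1 (sqrt (real n / real k)) * real (card ((\<Union>i<k. S (idx i)) \<inter> Q))" .
qed (simp)

end
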